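(* Let $\mathbb{K}$ be a field of characteristic $0$, $R=\mathbb{K}[x_1,\dots,x_n]$, and $I\subset R$ a monomial ideal such that $A=R/I$ is a level Artinian graded algebra of socle degree $t$. Let $\ell=x_1+\dots+x_n$. Then for every integer $k<t/2$ the multiplication maps $\times\ell^{t-2k}:A_k\to A_{t-k}$ and $\times\ell:A_k\to A_{k+1}$ are injective.
   Context: $A=R/I$ is standard graded, $A=A_0\oplus A_1\oplus\dots\oplus A_t$ with $A_t\neq 0$ (Artinian). The socle of $A$ is $\{f\in A: af=0 \text{ for all } a\in A_1\}$; $A$ is level if its socle equals $A_t$, and then $t$ is the socle degree. *)

theory Defs
  imports Main
begin

text \<open>Monomials of R = K[x_1..x_n] are exponent vectors m :: nat => nat with m i = 0 for i >= n
  (variable x_(i+1) corresponds to index i).  A monomial ideal is determined by the set of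
  monomials it contains, an upward closed set.  The quotient A = R/I has as K-basis the
  standard monomials (those not in I); elements of A are coefficient functions supported on
  the standard monomials, with the multiplication induced from R (products landing in I vanish).\<close>

definition monomials :: "nat \<Rightarrow> (nat \<Rightarrow> nat) set" where
  "monomials n = {m. \<forall>i\<ge>n. m i = 0}"

definition mdeg :: "nat \<Rightarrow> (nat \<Rightarrow> nat) \<Rightarrow> nat" where
  "mdeg n m = (\<Sum>i<n. m i)"

definition madd :: "(nat \<Rightarrow> nat) \<Rightarrow> (nat \<Rightarrow> nat) \<Rightarrow> (nat \<Rightarrow> nat)" where
  "madd m m' = (\<lambda>i. m i + m' i)"

definition is_monomial_ideal :: "nat \<Rightarrow> (nat \<Rightarrow> nat) set \<Rightarrow> bool" where
  "is_monomial_ideal n I \<longleftrightarrow> I \<subseteq> monomials n \<and> (\<forall>m\<in>I. \<forall>m'\<in>monomials n. madd m m' \<in> I)"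

definition std :: "nat \<Rightarrow> (nat \<Rightarrow> nat) set \<Rightarrow> (nat \<Rightarrow> nat) set" where
  "std n I = monomials n - I"

text \<open>A = R/I is Artinian iff it is finite dimensional, i.e. finitely many standard monomials.\<close>
definition artinian_quot :: "nat \<Rightarrow> (nat \<Rightarrow> nat) set \<Rightarrow> bool" where
  "artinian_quot n I \<longleftrightarrow> finite (std n I)"

definition quot_elems :: "nat \<Rightarrow> (nat \<Rightarrow> nat) set \<Rightarrow> ((nat \<Rightarrow> nat) \<Rightarrow> 'a::field) set" where
  "quot_elems n I = {f. \<forall>m. m \<notin> std n I \<longrightarrow> f m = 0}"

definition quot_mult :: "nat \<Rightarrow> (nat \<Rightarrow> nat) set \<Rightarrow> ((nat \<Rightarrow> nat) \<Rightarrow> 'a::field)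
    \<Rightarrow> ((nat \<Rightarrow> nat) \<Rightarrow> 'a) \<Rightarrow> ((nat \<Rightarrow> nat) \<Rightarrow> 'a)" where
  "quot_mult n I f g = (\<lambda>m. if m \<in> std n I then
      (\<Sum>p\<in>std n I. \<Sum>q\<in>std n I. if madd p q = m then f p * g q else 0) else 0)"

definition quot_one :: "nat \<Rightarrow> (nat \<Rightarrow> nat) set \<Rightarrow> ((nat \<Rightarrow> nat) \<Rightarrow> 'a::field)" where
  "quot_one n I = (\<lambda>m. if m \<in> std n I \<and> m = (\<lambda>_. 0) then 1 else 0)"

fun quot_pow :: "nat \<Rightarrow> (nat \<Rightarrow> nat) set \<Rightarrow> ((nat \<Rightarrow> nat) \<Rightarrow> 'a::field) \<Rightarrow> nat
    \<Rightarrow> ((nat \<Rightarrow> nat) \<Rightarrow> 'a)" where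
  "quot_pow n I f 0 = quot_one n I"
| "quot_pow n I f (Suc k) = quot_mult n I f (quot_pow n I f k)"

definition graded_piece :: "nat \<Rightarrow> (nat \<Rightarrow> nat) set \<Rightarrow> nat \<Rightarrow> ((nat \<Rightarrow> nat) \<Rightarrow> 'a::field) set" where
  "graded_piece n I k = {f \<in> quot_elems n I. \<forall>m. mdeg n m \<noteq> k \<longrightarrow> f m = 0}"

definition socle :: "nat \<Rightarrow> (nat \<Rightarrow> nat) set \<Rightarrow> ((nat \<Rightarrow> nat) \<Rightarrow> 'a::field) set" where
  "socle n I = {f \<in> quot_elems n I. \<forall>a \<in> graded_piece n I 1. quot_mult n I a f = (\<lambda>_. 0)}"

definition top_degree :: "'a::field itself \<Rightarrow> nat \<Rightarrow> (nat \<Rightarrow> nat) set \<Rightarrow> nat \<Rightarrow> bool" where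
  "top_degree _ n I t \<longleftrightarrow> (graded_piece n I t :: ((nat \<Rightarrow> nat) \<Rightarrow> 'a) set) \<noteq> {\<lambda>_. 0}
      \<and> (\<forall>j>t. (graded_piece n I j :: ((nat \<Rightarrow> nat) \<Rightarrow> 'a) set) = {\<lambda>_. 0})"

definition level :: "'a::field itself \<Rightarrow> nat \<Rightarrow> (nat \<Rightarrow> nat) set \<Rightarrow> nat \<Rightarrow> bool" where
  "level _ n I t \<longleftrightarrow> (socle n I :: ((nat \<Rightarrow> nat) \<Rightarrow> 'a) set) = graded_piece n I t"

definition sum_vars :: "nat \<Rightarrow> (nat \<Rightarrow> nat) set \<Rightarrow> ((nat \<Rightarrow> nat) \<Rightarrow> 'a::field)" where
  "sum_vars n I = (\<lambda>m. if m \<in> std n I \<and> (\<exists>i<n. m = (\<lambda>j. if j = i then 1 else 0)) then 1 else 0)"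

end

theory Submission
  imports Defs
begin


definition mle :: "(nat \<Rightarrow> nat) \<Rightarrow> (nat \<Rightarrow> nat) \<Rightarrow> bool" where
  "mle p m \<longleftrightarrow> (\<forall>i. p i \<le> m i)"

definition msub :: "(nat \<Rightarrow> nat) \<Rightarrow> (nat \<Rightarrow> nat) \<Rightarrow> (nat \<Rightarrow> nat)" where
  "msub m q = (\<lambda>i. m i - q i)"

lemma std_down:
  assumes mi: "is_monomial_ideal n I" and m: "m \<in> std n I" and le: "mle p m"
  shows "p \<in> std n I"
proof -
  have mm: "m \<in> monomials n" "m \<notin> I" using m by (auto simp: std_def)
  have pm: "p \<in> monomials n" using mm(1) le by (auto simp: monomials_def mle_def) (metis le_zero_eq)
  have qm: "msub m p \<in> monomials n" using mm(1) by (auto simp: monomials_def msub_def)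
  have eq: "madd p (msub m p) = m" using le by (auto simp: madd_def msub_def mle_def fun_eq_iff)
  show ?thesis
  proof (rule ccontr)
    assume "p \<notin> std n I"
    then have "p \<in> I" using pm by (auto simp: std_def)
    then have "madd p (msub m p) \<in> I" using mi qm by (auto simp: is_monomial_ideal_def)
    then show False using eq mm by simp
  qed
qed

lemma mdeg_upd: "i < n \<Longrightarrow> mdeg n (m(i := x)) + m i = mdeg n m + x"
proof -
  assume i: "i < n"
  have a: "mdeg n (m(i := x)) = x + (\<Sum>j\<in>{..<n}-{i}. m j)"
    unfolding mdeg_def using i by (simp add: sum.remove[of "{..<n}" i])
  have b: "mdeg n m = m i + (\<Sum>j\<in>{..<n}-{i}. m j)"
    unfolding mdeg_def using i by (simp add: sum.remove[of "{..<n}" i])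
  show ?thesis using a b by simp
qed

lemma conv_q:
  assumes mi: "is_monomial_ideal n I" and fin: "finite (std n I)" and m: "m \<in> std n I"
  shows "quot_mult n I f g m = (\<Sum>q\<in>std n I. if mle q m then f (msub m q) * g q else 0)"
proof -
  have "quot_mult n I f g m = (\<Sum>p\<in>std n I. \<Sum>q\<in>std n I. if madd p q = m then f p * g q else 0)"
    using m by (simp add: quot_mult_def)
  also have "\<dots> = (\<Sum>q\<in>std n I. \<Sum>p\<in>std n I. if madd p q = m then f p * g q else 0)"
    by (rule sum.swap)
  also have "\<dots> = (\<Sum>q\<in>std n I. if mle q m then f (msub m q) * g q else 0)"
  proof (rule sum.cong[OF refl])
    fix q assume q: "q \<in> std n I"
    have eq: "\<And>p. (madd p q = m) = (mle q m \<and> p = msub m q)"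
      by (auto simp: madd_def msub_def mle_def fun_eq_iff) (metis le_add2, metis diff_add_inverse2)
    show "(\<Sum>p\<in>std n I. if madd p q = m then f p * g q else 0) = (if mle q m then f (msub m q) * g q else 0)"
    proof (cases "mle q m")
      case True
      have "msub m q \<in> std n I" using std_down[OF mi m] True by (auto simp: mle_def msub_def)
      then show ?thesis using True fin by (simp add: eq sum.delta)
    next
      case False
      then show ?thesis by (simp add: eq)
    qed
  qed
  finally show ?thesis .
qed

lemma conv_p:
  assumes mi: "is_monomial_ideal n I" and fin: "finite (std n I)" and m: "m \<in> std n I"
  shows "quot_mult n I f g m = (\<Sum>p\<in>std n I. if mle p m then f p * g (msub m p) else 0)"
proof -
  have "quot_mult n I f g m = (\<Sum>p\<in>std n I. \<Sum>q\<in>std n I. if madd p q = m then f p * g q else 0)"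
    using m by (simp add: quot_mult_def)
  also have "\<dots> = (\<Sum>p\<in>std n I. if mle p m then f p * g (msub m p) else 0)"
  proof (rule sum.cong[OF refl])
    fix p assume p: "p \<in> std n I"
    have eq: "\<And>q. (madd p q = m) = (mle p m \<and> q = msub m p)"
      by (auto simp: madd_def msub_def mle_def fun_eq_iff) (metis le_add1, metis diff_add_inverse)
    show "(\<Sum>q\<in>std n I. if madd p q = m then f p * g q else 0) = (if mle p m then f p * g (msub m p) else 0)"
    proof (cases "mle p m")
      case True
      have "msub m p \<in> std n I" using std_down[OF mi m] True by (auto simp: mle_def msub_def)
      then show ?thesis using True fin by (simp add: eq sum.delta)
    next
      case False
      then show ?thesis by (simp add: eq)
    qed
  qed
  finally show ?thesis .
qed

definition Lop :: "nat \<Rightarrow> (nat \<Rightarrow> nat) set \<Rightarrow> ((nat \<Rightarrow> nat) \<Rightarrow> 'a::field) \<Rightarrow> ((nat \<Rightarrow> nat) \<Rightarrow> 'a)" where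
  "Lop n I g = (\<lambda>m. if m \<in> std n I then (\<Sum>i<n. if 1 \<le> m i then g (m(i := m i - 1)) else 0) else 0)"

definition ev :: "nat \<Rightarrow> nat \<Rightarrow> nat" where "ev i = (\<lambda>j. if j = i then 1 else 0)"

lemma Lmult:
  assumes mi: "is_monomial_ideal n I" and fin: "finite (std n I)"
  shows "quot_mult n I (sum_vars n I) g = Lop n I g"
proof
  fix m
  show "quot_mult n I (sum_vars n I) g m = Lop n I g m"
  proof (cases "m \<in> std n I")
    case False
    then show ?thesis by (simp add: quot_mult_def Lop_def)
  next
    case m: True
    have "quot_mult n I (sum_vars n I) g m = (\<Sum>p\<in>std n I. if mle p m then sum_vars n I p * g (msub m p) else 0)"
      by (rule conv_p[OF mi fin m])
    also have "\<dots> = (\<Sum>p\<in>std n I. if mle p m \<and> (\<exists>i<n. p = ev i) then g (msub m p) else 0)"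
      by (rule sum.cong[OF refl]) (auto simp: sum_vars_def ev_def)
    also have "\<dots> = (\<Sum>p\<in>{p\<in>std n I. mle p m \<and> (\<exists>i<n. p = ev i)}. g (msub m p))"
      using fin by (simp add: sum.inter_filter)
    also have "{p\<in>std n I. mle p m \<and> (\<exists>i<n. p = ev i)} = ev ` {i\<in>{..<n}. 1 \<le> m i}"
    proof
      show "{p\<in>std n I. mle p m \<and> (\<exists>i<n. p = ev i)} \<subseteq> ev ` {i\<in>{..<n}. 1 \<le> m i}"
      proof
        fix p assume "p \<in> {p\<in>std n I. mle p m \<and> (\<exists>i<n. p = ev i)}"
        then obtain i where i: "i < n" "p = ev i" "mle p m" by auto
        then have "1 \<le> m i" unfolding mle_def ev_def by (metis (full_types))
        then show "p \<in> ev ` {i\<in>{..<n}. 1 \<le> m i}" using i by auto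
      qed
    next
      show "ev ` {i\<in>{..<n}. 1 \<le> m i} \<subseteq> {p\<in>std n I. mle p m \<and> (\<exists>i<n. p = ev i)}"
      proof
        fix p assume "p \<in> ev ` {i\<in>{..<n}. 1 \<le> m i}"
        then obtain i where i: "i < n" "p = ev i" "1 \<le> m i" by auto
        then have le: "mle p m" by (auto simp: mle_def ev_def)
        then have "p \<in> std n I" using std_down[OF mi m] by auto
        then show "p \<in> {p\<in>std n I. mle p m \<and> (\<exists>i<n. p = ev i)}" using i le by auto
      qed
    qed
    also have "(\<Sum>p\<in>ev ` {i\<in>{..<n}. 1 \<le> m i}. g (msub m p)) = (\<Sum>i\<in>{i\<in>{..<n}. 1 \<le> m i}. g (msub m (ev i)))"
    proof (rule sum.reindex_cong[OF _ refl refl])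
      show "inj_on ev {i\<in>{..<n}. 1 \<le> m i}"
      proof (rule inj_onI)
        fix x y assume "ev x = ev y"
        then have "ev x x = ev y x" by simp
        then show "x = y" by (simp add: ev_def split: if_splits)
      qed
    qed
    also have "\<dots> = (\<Sum>i\<in>{i\<in>{..<n}. 1 \<le> m i}. g (m(i := m i - 1)))"
      by (rule sum.cong[OF refl]) (auto simp: msub_def ev_def fun_eq_iff intro!: arg_cong[where f=g])
    also have "\<dots> = (\<Sum>i<n. if 1 \<le> m i then g (m(i := m i - 1)) else 0)"
      by (rule sum.inter_filter) simp
    finally show ?thesis using m by (simp add: Lop_def)
  qed
qed

lemma Lcomm:
  assumes mi: "is_monomial_ideal n I" and fin: "finite (std n I)"
  shows "quot_mult n I (Lop n I P) f = Lop n I (quot_mult n I P f)"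
proof
  fix m
  show "quot_mult n I (Lop n I P) f m = Lop n I (quot_mult n I P f) m"
  proof (cases "m \<in> std n I")
    case False
    then show ?thesis by (simp add: quot_mult_def Lop_def)
  next
    case m: True
    define X where "X q i = (if mle q m \<and> 1 \<le> m i - q i then P ((msub m q)(i := m i - q i - 1)) * f q else 0)" for q i
    define Y where "Y i q = (if 1 \<le> m i \<and> mle q (m(i := m i - 1)) then P (msub (m(i := m i - 1)) q) * f q else 0)" for i q
    have "quot_mult n I (Lop n I P) f m = (\<Sum>q\<in>std n I. if mle q m then Lop n I P (msub m q) * f q else 0)"
      by (rule conv_q[OF mi fin m])
    also have "\<dots> = (\<Sum>q\<in>std n I. \<Sum>i<n. X q i)"
    proof (rule sum.cong[OF refl])
      fix q assume q: "q \<in> std n I"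
      show "(if mle q m then Lop n I P (msub m q) * f q else 0) = (\<Sum>i<n. X q i)"
      proof (cases "mle q m")
        case True
        have "msub m q \<in> std n I" using std_down[OF mi m] True by (auto simp: mle_def msub_def)
        then have "Lop n I P (msub m q) * f q = (\<Sum>i<n. (if 1 \<le> msub m q i then P ((msub m q)(i := msub m q i - 1)) else 0) * f q)"
          by (simp add: Lop_def sum_distrib_right)
        also have "\<dots> = (\<Sum>i<n. X q i)"
          by (rule sum.cong[OF refl]) (simp add: X_def True msub_def)
        finally show ?thesis using True by simp
      next
        case False
        then show ?thesis by (simp add: X_def)
      qed
    qed
    also have "\<dots> = (\<Sum>i<n. \<Sum>q\<in>std n I. X q i)" by (rule sum.swap)
    also have "\<dots> = (\<Sum>i<n. \<Sum>q\<in>std n I. Y i q)"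
    proof (intro sum.cong refl)
      fix i q
      have c: "(mle q m \<and> 1 \<le> m i - q i) = (1 \<le> m i \<and> mle q (m(i := m i - 1)))"
      proof
        assume a: "mle q m \<and> 1 \<le> m i - q i"
        then have "q i \<le> m i - 1" by linarith
        then show "1 \<le> m i \<and> mle q (m(i := m i - 1))" using a by (auto simp: mle_def)
      next
        assume a: "1 \<le> m i \<and> mle q (m(i := m i - 1))"
        then have "q i \<le> m i - 1" unfolding mle_def by (metis fun_upd_same)
        moreover have "\<forall>j. j \<noteq> i \<longrightarrow> q j \<le> m j" using a unfolding mle_def by (metis fun_upd_other)
        moreover have "q i \<le> m i" using \<open>q i \<le> m i - 1\<close> by linarith
        ultimately have "\<forall>j. q j \<le> m j" by (metis order_refl)
        moreover have "1 \<le> m i - q i" using a \<open>q i \<le> m i - 1\<close> by linarith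
        ultimately show "mle q m \<and> 1 \<le> m i - q i" unfolding mle_def by simp
      qed
      have p: "(msub m q)(i := m i - q i - 1) = msub (m(i := m i - 1)) q"
        by (auto simp: msub_def fun_eq_iff)
      show "X q i = Y i q" unfolding X_def Y_def using c p by simp
    qed
    also have "\<dots> = (\<Sum>i<n. if 1 \<le> m i then quot_mult n I P f (m(i := m i - 1)) else 0)"
    proof (rule sum.cong[OF refl])
      fix i assume i: "i \<in> {..<n}"
      show "(\<Sum>q\<in>std n I. Y i q) = (if 1 \<le> m i then quot_mult n I P f (m(i := m i - 1)) else 0)"
      proof (cases "1 \<le> m i")
        case True
        have "m(i := m i - 1) \<in> std n I" using std_down[OF mi m] by (auto simp: mle_def)
        then have cq: "quot_mult n I P f (m(i := m i - 1)) = (\<Sum>q\<in>std n I. if mle q (m(i := m i - 1)) then P (msub (m(i := m i - 1)) q) * f q else 0)"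
          by (rule conv_q[OF mi fin])
        show ?thesis using True unfolding cq Y_def if_P[OF True] by (intro sum.cong refl) simp_all
      next
        case False
        then show ?thesis by (simp add: Y_def)
      qed
    qed
    finally show ?thesis using m by (simp add: Lop_def)
  qed
qed

lemma one_mult:
  assumes mi: "is_monomial_ideal n I" and fin: "finite (std n I)" and f: "f \<in> quot_elems n I"
  shows "quot_mult n I (quot_one n I) f = f"
proof
  fix m
  show "quot_mult n I (quot_one n I) f m = f m"
  proof (cases "m \<in> std n I")
    case False
    then show ?thesis using f by (simp add: quot_mult_def quot_elems_def)
  next
    case m: True
    have z: "(\<lambda>_. 0) \<in> std n I" using std_down[OF mi m] by (auto simp: mle_def)
    have "quot_mult n I (quot_one n I) f m = (\<Sum>q\<in>std n I. if mle q m then quot_one n I (msub m q) * f q else 0)"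
      by (rule conv_q[OF mi fin m])
    also have "\<dots> = (\<Sum>q\<in>std n I. if q = m then f q else 0)"
    proof (rule sum.cong[OF refl])
      fix q
      show "(if mle q m then quot_one n I (msub m q) * f q else 0) = (if q = m then f q else 0)"
      proof (cases "q = m")
        case True
        have "msub m m = (\<lambda>_. 0)" by (simp add: msub_def)
        then show ?thesis using True z by (simp add: mle_def quot_one_def)
      next
        case False
        have "mle q m \<Longrightarrow> msub m q \<noteq> (\<lambda>_. 0)"
        proof
          assume "mle q m" "msub m q = (\<lambda>_. 0)"
          then have "q = m" by (auto simp: mle_def msub_def fun_eq_iff) (metis diff_is_0_eq le_antisym)
          then show False using False by simp
        qed
        then show ?thesis using False by (auto simp: quot_one_def)
      qed
    qed
    also have "\<dots> = f m" using fin m by (simp add: sum.delta)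
    finally show ?thesis .
  qed
qed

lemma pow_mult:
  assumes mi: "is_monomial_ideal n I" and fin: "finite (std n I)" and f: "f \<in> quot_elems n I"
  shows "quot_mult n I (quot_pow n I (sum_vars n I) r) f = (Lop n I ^^ r) f"
proof (induction r)
  case 0
  then show ?case using one_mult[OF mi fin f] by simp
next
  case (Suc r)
  then show ?case by (simp add: Lmult[OF mi fin] Lcomm[OF mi fin])
qed



lemma sl2_inj:
  fixes E F :: "('b \<Rightarrow> 'a::field_char_0) \<Rightarrow> ('b \<Rightarrow> 'a)" and P :: "nat \<Rightarrow> ('b \<Rightarrow> 'a) \<Rightarrow> bool" and t :: nat
  assumes Elin: "\<And>a b c. E (\<lambda>x. a x + c * b x) = (\<lambda>x. E a x + c * E b x)"
    and F0: "F (\<lambda>x. 0) = (\<lambda>x. 0)"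
    and PE: "\<And>d g. P d g \<Longrightarrow> P (Suc d) (E g)"
    and PF: "\<And>d g. P (Suc d) g \<Longrightarrow> P d (F g)"
    and PF0: "\<And>g. P 0 g \<Longrightarrow> F g = (\<lambda>x. 0)"
    and comm: "\<And>d g. P d g \<Longrightarrow> E (F g) = (\<lambda>x. F (E g) x + (of_nat (2*d) - of_nat t) * g x)"
  shows "P d v \<Longrightarrow> 2*d < t \<Longrightarrow> (E ^^ (t - 2*d)) v = (\<lambda>x. 0) \<Longrightarrow> v = (\<lambda>x. 0)"
proof -
  have E0: "E (\<lambda>x. 0) = (\<lambda>x. 0)"
  proof -
    have "E (\<lambda>x. (0::'a) + 1 * 0) = (\<lambda>x. E (\<lambda>x. 0) x + 1 * E (\<lambda>x. 0) x)" by (rule Elin)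
    then have "\<And>x. E (\<lambda>x. 0) x = E (\<lambda>x. 0) x + E (\<lambda>x. 0) x" by (simp add: fun_eq_iff)
    then show ?thesis by (simp add: fun_eq_iff)
  qed
  have Epow_lin: "(E ^^ j) (\<lambda>x. a x + c * b x) = (\<lambda>x. (E ^^ j) a x + c * (E ^^ j) b x)" for j a b c
    by (induction j) (simp_all add: Elin)
  have Epow0: "(E ^^ j) (\<lambda>x. 0) = (\<lambda>x. 0)" for j
    by (induction j) (simp_all add: E0)
  have Epow_sc: "(E ^^ j) (\<lambda>x. c * b x) = (\<lambda>x. c * (E ^^ j) b x)" for j b c
    using Epow_lin[of j "\<lambda>x. 0" c b] by (simp add: Epow0)
  have Ppow: "P d g \<Longrightarrow> P (d + j) ((E ^^ j) g)" for d g j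
    by (induction j) (simp_all add: PE)
  have FE: "P d v \<Longrightarrow> F ((E ^^ Suc j) v) = (\<lambda>x. (E ^^ Suc j) (F v) x
      + of_nat (Suc j) * (of_nat t - of_nat (2*d) - of_nat j) * (E ^^ j) v x)" for d v j
  proof (induction j)
    case 0
    have "E (F v) = (\<lambda>x. F (E v) x + (of_nat (2*d) - of_nat t) * v x)" by (rule comm[OF 0])
    then show ?case by (simp add: fun_eq_iff algebra_simps)
  next
    case (Suc j)
    define w where "w = (E ^^ Suc j) v"
    have Pw: "P (d + Suc j) w" unfolding w_def by (rule Ppow[OF Suc.prems])
    have c: "E (F w) = (\<lambda>x. F (E w) x + (of_nat (2*(d + Suc j)) - of_nat t) * w x)" by (rule comm[OF Pw])
    have ih: "F w = (\<lambda>x. (E ^^ Suc j) (F v) x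
      + of_nat (Suc j) * (of_nat t - of_nat (2*d) - of_nat j) * (E ^^ j) v x)"
      unfolding w_def by (rule Suc.IH[OF Suc.prems])
    have "E (F w) = (\<lambda>x. (E ^^ Suc (Suc j)) (F v) x
      + of_nat (Suc j) * (of_nat t - of_nat (2*d) - of_nat j) * (E ^^ Suc j) v x)"
      unfolding ih by (simp add: Elin)
    then have "F (E w) = (\<lambda>x. (E ^^ Suc (Suc j)) (F v) x
      + of_nat (Suc j) * (of_nat t - of_nat (2*d) - of_nat j) * (E ^^ Suc j) v x
      - (of_nat (2*(d + Suc j)) - of_nat t) * w x)"
      using c by (simp add: fun_eq_iff algebra_simps)
    moreover have "(E ^^ Suc (Suc j)) v = E w" by (simp add: w_def)
    ultimately show ?case unfolding w_def
      by (simp add: fun_eq_iff algebra_simps)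
  qed
  have cnz: "(of_nat (Suc j) * (of_nat t - of_nat (2*d) - of_nat j) :: 'a) \<noteq> 0"
    if "j < t - 2*d" for j d
  proof -
    have e: "(of_nat t - of_nat (2*d) - of_nat j :: 'a) = of_nat (t - 2*d - j)"
      using that by (simp add: of_nat_diff)
    show ?thesis unfolding e of_nat_mult[symmetric] of_nat_eq_0_iff using that by simp
  qed
  have desc: "(E ^^ (t - 2*d - i)) v = (\<lambda>x. 0)"
    if Pv: "P d v" and Fv: "F v = (\<lambda>x. 0)" and top: "(E ^^ (t - 2*d)) v = (\<lambda>x. 0)"
      and i: "i \<le> t - 2*d" for d v i
    using i
  proof (induction i)
    case 0
    then show ?case using top by simp
  next
    case (Suc i)
    define j where "j = t - 2*d - Suc i"
    have sj: "Suc j = t - 2*d - i" using Suc.prems unfolding j_def by simp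
    have jl: "j < t - 2*d" using Suc.prems unfolding j_def by simp
    have z: "(E ^^ Suc j) v = (\<lambda>x. 0)" using Suc.IH Suc.prems sj by simp
    define c where "c = (of_nat (Suc j) * (of_nat t - of_nat (2*d) - of_nat j) :: 'a)"
    have cn: "c \<noteq> 0" unfolding c_def by (rule cnz[OF jl])
    have "F ((E ^^ Suc j) v) = (\<lambda>x. (E ^^ Suc j) (F v) x + c * (E ^^ j) v x)"
      unfolding c_def by (rule FE[OF Pv])
    then have "\<And>x. c * (E ^^ j) v x = (0::'a)"
      unfolding z F0 Fv Epow0 by (metis add_0)
    then have "(E ^^ j) v = (\<lambda>x. 0)" using cn by (simp add: fun_eq_iff)
    then show ?case unfolding j_def by simp
  qed
  have main: "\<forall>v. P d v \<longrightarrow> 2*d < t \<longrightarrow> (E ^^ (t - 2*d)) v = (\<lambda>x. 0) \<longrightarrow> v = (\<lambda>x. 0)" for d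
  proof (induction d)
    case 0
    show ?case
    proof (intro allI impI)
      fix v assume a: "P 0 v" "2*0 < t" "(E ^^ (t - 2*0)) v = (\<lambda>x. 0)"
      have "(E ^^ (t - 2*0 - (t - 2*0))) v = (\<lambda>x. 0)" by (rule desc[OF a(1) PF0[OF a(1)] a(3) order_refl])
      then show "v = (\<lambda>x. 0)" by simp
    qed
  next
    case (Suc d)
    show ?case
    proof (intro allI impI)
      fix v assume a: "P (Suc d) v" "2*Suc d < t" "(E ^^ (t - 2*Suc d)) v = (\<lambda>x. 0)"
      define r where "r = t - 2 * Suc d"
      have r1: "r = Suc (r - 1)" using a(2) unfolding r_def by simp
      have "F ((E ^^ Suc (r - 1)) v) = (\<lambda>x. (E ^^ Suc (r - 1)) (F v) x
        + of_nat (Suc (r - 1)) * (of_nat t - of_nat (2*Suc d) - of_nat (r - 1)) * (E ^^ (r - 1)) v x)"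
        by (rule FE[OF a(1)])
      then have er: "(E ^^ r) (F v) = (\<lambda>x. 0 + (- (of_nat (Suc (r - 1)) * (of_nat t - of_nat (2*Suc d) - of_nat (r - 1))))
           * (E ^^ (r - 1)) v x)"
        using a(3) F0 unfolding r_def[symmetric] r1[symmetric] by (simp add: fun_eq_iff eq_neg_iff_add_eq_0 algebra_simps)
      have "(E ^^ (t - 2*d)) (F v) = (E ^^ 2) ((E ^^ r) (F v))"
      proof -
        have tr: "t - 2*d = 2 + r" using a(2) unfolding r_def by simp
        show ?thesis by (simp only: tr funpow_add comp_apply)
      qed
      also have "\<dots> = (\<lambda>x. 0)"
      proof -
        have "(E ^^ 2) ((E ^^ (r - 1)) v) = (E ^^ 1) ((E ^^ r) v)"
        proof -
          have "2 + (r - 1) = 1 + r" using r1 by simp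
          then have "(E ^^ (2 + (r - 1))) v = (E ^^ (1 + r)) v" by simp
          then show ?thesis by (simp only: funpow_add comp_apply)
        qed
        then have z: "(E ^^ 2) ((E ^^ (r - 1)) v) = (\<lambda>x. 0)"
          using a(3) E0 unfolding r_def by simp
        show ?thesis unfolding er Epow_lin z Epow0 by simp
      qed
      finally have "(E ^^ (t - 2*d)) (F v) = (\<lambda>x. 0)" .
      then have Fv: "F v = (\<lambda>x. 0)" using Suc.IH PF[OF a(1)] a(2) by simp
      have "(E ^^ (t - 2*Suc d - (t - 2*Suc d))) v = (\<lambda>x. 0)" by (rule desc[OF a(1) Fv a(3) order_refl])
      then show "v = (\<lambda>x. 0)" by simp
    qed
  qed
  show "P d v \<Longrightarrow> 2*d < t \<Longrightarrow> (E ^^ (t - 2*d)) v = (\<lambda>x. 0) \<Longrightarrow> v = (\<lambda>x. 0)"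
    using main by blast
qed



definition EM :: "nat \<Rightarrow> (nat \<Rightarrow> nat) \<Rightarrow> ((nat \<Rightarrow> nat) \<Rightarrow> 'a::field) \<Rightarrow> ((nat \<Rightarrow> nat) \<Rightarrow> 'a)" where
  "EM n M g = (\<lambda>m. if mle m M then (\<Sum>i<n. if 1 \<le> m i then g (m(i := m i - 1)) else 0) else 0)"

definition cM :: "(nat \<Rightarrow> nat) \<Rightarrow> nat \<Rightarrow> (nat \<Rightarrow> nat) \<Rightarrow> nat" where
  "cM M i m = (m i + 1) * (M i - m i)"

definition FM :: "nat \<Rightarrow> (nat \<Rightarrow> nat) \<Rightarrow> ((nat \<Rightarrow> nat) \<Rightarrow> 'a::field) \<Rightarrow> ((nat \<Rightarrow> nat) \<Rightarrow> 'a)" where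
  "FM n M g = (\<lambda>m. if mle m M then (\<Sum>i<n. of_nat (cM M i m) * g (m(i := m i + 1))) else 0)"

definition PM :: "nat \<Rightarrow> (nat \<Rightarrow> nat) \<Rightarrow> nat \<Rightarrow> ((nat \<Rightarrow> nat) \<Rightarrow> 'a::field) \<Rightarrow> bool" where
  "PM n M d g \<longleftrightarrow> (\<forall>m. g m \<noteq> 0 \<longrightarrow> mle m M \<and> mdeg n m = d)"

lemma EM_lin: "EM n M (\<lambda>x. a x + c * b x) = (\<lambda>x. EM n M a x + c * EM n M b x)"
proof
  fix m
  have "(\<Sum>i<n. if 1 \<le> m i then a (m(i := m i - 1)) + c * b (m(i := m i - 1)) else 0)
     = (\<Sum>i<n. (if 1 \<le> m i then a (m(i := m i - 1)) else 0) + c * (if 1 \<le> m i then b (m(i := m i - 1)) else 0))"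
    by (rule sum.cong) auto
  then show "EM n M (\<lambda>x. a x + c * b x) m = EM n M a m + c * EM n M b m"
    by (simp add: EM_def sum.distrib sum_distrib_left)
qed

lemma FM0: "FM n M (\<lambda>x. 0) = (\<lambda>x. 0)"
  by (rule ext) (simp add: FM_def)

lemma sum_nz: "(\<Sum>i<n. f i) \<noteq> 0 \<Longrightarrow> \<exists>i<n. f i \<noteq> 0"
  by (metis lessThan_iff sum.neutral)

lemma PM_E: "PM n M d g \<Longrightarrow> PM n M (Suc d) (EM n M g)"
  unfolding PM_def
proof (intro allI impI)
  fix m assume P: "\<forall>m. g m \<noteq> 0 \<longrightarrow> mle m M \<and> mdeg n m = d" and nz: "EM n M g m \<noteq> 0"
  then have le: "mle m M" by (auto simp: EM_def split: if_splits)
  then obtain i where i: "i < n" "(if 1 \<le> m i then g (m(i := m i - 1)) else 0) \<noteq> 0"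
    using nz sum_nz by (auto simp: EM_def)
  then have mi: "1 \<le> m i" and g: "g (m(i := m i - 1)) \<noteq> 0" by (auto split: if_splits)
  have "mdeg n (m(i := m i - 1)) = d" using P g by blast
  then have "mdeg n m = Suc d" using mdeg_upd[OF i(1), of m "m i - 1"] mi by simp
  then show "mle m M \<and> mdeg n m = Suc d" using le by simp
qed

lemma PM_F_aux:
  assumes P: "PM n M d g" and nz: "FM n M g m \<noteq> 0"
  shows "mle m M \<and> mdeg n m + 1 = d"
proof -
  have le: "mle m M" using nz by (auto simp: FM_def split: if_splits)
  have "(\<Sum>i<n. of_nat (cM M i m) * g (m(i := m i + 1))) \<noteq> 0" using nz le by (simp add: FM_def)
  then obtain i where i: "i < n" "of_nat (cM M i m) * g (m(i := m i + 1)) \<noteq> 0"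
    using sum_nz by blast
  then have g: "g (m(i := m i + 1)) \<noteq> 0" by auto
  have "mdeg n (m(i := m i + 1)) = d" using P g by (auto simp: PM_def)
  then have "mdeg n m + 1 = d" using mdeg_upd[OF i(1), of m "m i + 1"] by simp
  then show ?thesis using le by simp
qed

lemma PM_F: "PM n M (Suc d) g \<Longrightarrow> PM n M d (FM n M g)"
proof -
  assume P: "PM n M (Suc d) g"
  show ?thesis unfolding PM_def
  proof (intro allI impI)
    fix m assume "FM n M g m \<noteq> 0"
    from PM_F_aux[OF P this] show "mle m M \<and> mdeg n m = d" by simp
  qed
qed

lemma PM_F0: "PM n M 0 g \<Longrightarrow> FM n M g = (\<lambda>x. 0)"
proof -
  assume P: "PM n M 0 g"
  show ?thesis
  proof
    fix m show "FM n M g m = 0"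
    proof (rule ccontr)
      assume "FM n M g m \<noteq> 0"
      from PM_F_aux[OF P this] show False by simp
    qed
  qed
qed

lemma ag_h: "(x::'a::ab_group_add) + b = y + a \<Longrightarrow> x - y = a - b"
  by (metis add_diff_cancel_right' diff_diff_eq2 add_diff_cancel_left' diff_add_eq)

lemma mle_upd: "mle m M \<Longrightarrow> mle (m(j := x)) M \<longleftrightarrow> x \<le> M j"
  by (auto simp: mle_def)

lemma nat_ident: "a \<le> b \<Longrightarrow> a * (b + 1 - a) + b = (a + 1) * (b - a) + 2 * (a::nat)"
proof -
  assume "a \<le> b"
  then obtain k where b: "b = a + k" using le_Suc_ex by blast
  have 1: "b + 1 - a = k + 1" using b by simp
  have 2: "b - a = k" using b by simp
  show ?thesis unfolding 1 2 b by (simp add: add_mult_distrib add_mult_distrib2)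
qed
lemma comm_M:
  assumes P: "PM n M d g"
  shows "EM n M (FM n M g) = (\<lambda>m. FM n M (EM n M g) m + (of_nat (2*d) - of_nat (mdeg n M)) * g m)"
proof
  fix m
  show "EM n M (FM n M g) m = FM n M (EM n M g) m + (of_nat (2*d) - of_nat (mdeg n M)) * g m"
  proof (cases "mle m M")
    case False
    then have "g m = 0" using P by (auto simp: PM_def)
    then show ?thesis using False by (simp add: EM_def FM_def)
  next
    case le: True
    define A where "A i j = (if 1 \<le> m i then of_nat (cM M j (m(i := m i - 1))) * g ((m(i := m i - 1))(j := (m(i := m i - 1)) j + 1)) else 0)" for i j
    define B where "B i j = of_nat (cM M j m) * (if mle (m(j := m j + 1)) M then (if 1 \<le> (m(j := m j + 1)) i then g ((m(j := m j + 1))(i := (m(j := m j + 1)) i - 1)) else 0) else 0)" for i j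
    have leD: "mle (m(i := m i - 1)) M" for i using le unfolding mle_def by (auto intro: le_trans[OF diff_le_self])
    have EF: "EM n M (FM n M g) m = (\<Sum>i<n. \<Sum>j<n. A i j)"
      unfolding EM_def using le
    proof (simp only: if_True, intro sum.cong refl)
      fix i
      show "(if 1 \<le> m i then FM n M g (m(i := m i - 1)) else 0) = (\<Sum>j<n. A i j)"
        by (cases "1 \<le> m i") (simp_all add: A_def FM_def leD leD[simplified])
    qed
    have FE: "FM n M (EM n M g) m = (\<Sum>i<n. \<Sum>j<n. B i j)"
    proof -
      have "FM n M (EM n M g) m = (\<Sum>j<n. \<Sum>i<n. B i j)"
        unfolding FM_def using le
      proof (simp only: if_True, intro sum.cong refl)
        fix j
        show "of_nat (cM M j m) * EM n M g (m(j := m j + 1)) = (\<Sum>i<n. B i j)"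
        proof (cases "mle (m(j := m j + 1)) M")
          case True
          have "EM n M g (m(j := m j + 1)) = (\<Sum>i<n. if 1 \<le> (m(j := m j + 1)) i then g ((m(j := m j + 1))(i := (m(j := m j + 1)) i - 1)) else 0)"
            by (simp only: EM_def True if_True)
          then show ?thesis by (simp only: B_def True if_True sum_distrib_left)
        next
          case False
          have "EM n M g (m(j := m j + 1)) = 0" by (simp only: EM_def False if_False)
          moreover have "B i j = 0" for i by (simp only: B_def False if_False mult_zero_right)
          ultimately show ?thesis by simp
        qed
      qed
      also have "\<dots> = (\<Sum>i<n. \<Sum>j<n. B i j)" by (rule sum.swap)
      finally show ?thesis .
    qed
    have off: "A i j = B i j" if ij: "i \<noteq> j" for i j
    proof (cases "1 \<le> m i")
      case False
      then show ?thesis using ij by (simp add: A_def B_def)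
    next
      case mi: True
      have c1: "cM M j (m(i := m i - 1)) = cM M j m" using ij by (simp add: cM_def)
      have pt: "(m(i := m i - 1))(j := (m(i := m i - 1)) j + 1) = (m(j := m j + 1))(i := (m(j := m j + 1)) i - 1)"
        using ij by (auto simp: fun_eq_iff)
      show ?thesis
      proof (cases "m j + 1 \<le> M j")
        case True
        then show ?thesis using mi ij c1 pt le by (simp add: A_def B_def mle_upd)
      next
        case False
        then have "M j - m j = 0" by simp
        then have "cM M j m = 0" by (simp add: cM_def)
        then show ?thesis using mi c1 by (simp add: A_def B_def)
      qed
    qed
    have diagA: "A i i = of_nat (m i * (M i + 1 - m i)) * g m" for i
    proof (cases "1 \<le> m i")
      case False
      then have z: "m i = 0" by simp
      show ?thesis unfolding A_def z using False by simp
    next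
      case True
      have "cM M i (m(i := m i - 1)) = m i * (M i + 1 - m i)" using True by (simp add: cM_def)
      moreover have "(m(i := m i - 1))(i := (m(i := m i - 1)) i + 1) = m" using True by (auto simp: fun_eq_iff)
      ultimately show ?thesis using True by (simp add: A_def)
    qed
    have diagB: "B i i = of_nat ((m i + 1) * (M i - m i)) * g m" for i
    proof (cases "m i + 1 \<le> M i")
      case True
      have "(m(i := m i + 1))(i := (m(i := m i + 1)) i - 1) = m" by (auto simp: fun_eq_iff)
      then show ?thesis using True le by (simp add: B_def mle_upd cM_def)
    next
      case False
      then have "M i - m i = 0" by simp
      then show ?thesis by (simp add: B_def cM_def)
    qed
    have diag: "A i i - B i i = (of_nat (2 * m i) - of_nat (M i)) * g m" for i
    proof -
      have mM: "m i \<le> M i" using le by (simp add: mle_def)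
      have "(of_nat (m i * (M i + 1 - m i)) + of_nat (M i) :: 'a) = of_nat ((m i + 1) * (M i - m i)) + of_nat (2 * m i)"
        unfolding of_nat_add[symmetric] using nat_ident[OF mM] by simp
      then have "(of_nat (m i * (M i + 1 - m i)) - of_nat ((m i + 1) * (M i - m i)) :: 'a) = of_nat (2 * m i) - of_nat (M i)"
        by (rule ag_h)
      then show ?thesis unfolding diagA diagB by (metis left_diff_distrib)
    qed
    have "EM n M (FM n M g) m - FM n M (EM n M g) m = (\<Sum>i<n. \<Sum>j<n. A i j - B i j)"
      unfolding EF FE by (simp add: sum_subtractf)
    also have "\<dots> = (\<Sum>i<n. A i i - B i i)"
    proof (rule sum.cong[OF refl])
      fix i assume i: "i \<in> {..<n}"
      have "(\<Sum>j<n. A i j - B i j) = (\<Sum>j<n. if j = i then A i i - B i i else 0)"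
        by (rule sum.cong[OF refl]) (auto simp: off)
      also have "\<dots> = A i i - B i i" using i by (simp add: sum.delta')
      finally show "(\<Sum>j<n. A i j - B i j) = A i i - B i i" .
    qed
    also have "\<dots> = (\<Sum>i<n. (of_nat (2 * m i) - of_nat (M i)) * g m)" by (simp add: diag)
    also have "\<dots> = (of_nat (2 * mdeg n m) - of_nat (mdeg n M)) * g m"
    proof -
      have s: "(\<Sum>i<n. (of_nat (2 * m i) - of_nat (M i)) :: 'a) = of_nat (2 * mdeg n m) - of_nat (mdeg n M)"
        by (simp add: sum_subtractf mdeg_def sum_distrib_left)
      show ?thesis by (simp only: sum_distrib_right[symmetric] s)
    qed
    also have "\<dots> = (of_nat (2*d) - of_nat (mdeg n M)) * g m"
      using P by (cases "g m = 0") (auto simp: PM_def)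
    finally show ?thesis by (simp add: algebra_simps)
  qed
qed



definition proj :: "(nat \<Rightarrow> nat) \<Rightarrow> ((nat \<Rightarrow> nat) \<Rightarrow> 'a::field) \<Rightarrow> ((nat \<Rightarrow> nat) \<Rightarrow> 'a)" where
  "proj M g = (\<lambda>m. if mle m M then g m else 0)"

lemma proj_L:
  assumes mi: "is_monomial_ideal n I" and M: "M \<in> std n I"
  shows "proj M (Lop n I g) = EM n M (proj M g)"
proof
  fix m
  show "proj M (Lop n I g) m = EM n M (proj M g) m"
  proof (cases "mle m M")
    case False
    then show ?thesis by (simp add: proj_def EM_def)
  next
    case le: True
    have ms: "m \<in> std n I" by (rule std_down[OF mi M le])
    have leD: "mle (m(i := m i - 1)) M" for i using le unfolding mle_def by (auto intro: le_trans[OF diff_le_self])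
    have "proj M (Lop n I g) m = (\<Sum>i<n. if 1 \<le> m i then g (m(i := m i - 1)) else 0)"
      by (simp only: proj_def Lop_def le ms if_True)
    also have "\<dots> = (\<Sum>i<n. if 1 \<le> m i then proj M g (m(i := m i - 1)) else 0)"
      by (rule sum.cong[OF refl]) (simp add: proj_def leD leD[simplified])
    also have "\<dots> = EM n M (proj M g) m"
      by (simp only: EM_def le if_True)
    finally show ?thesis .
  qed
qed

lemma proj_Lpow:
  assumes mi: "is_monomial_ideal n I" and M: "M \<in> std n I"
  shows "proj M ((Lop n I ^^ r) g) = (EM n M ^^ r) (proj M g)"
  by (induction r) (simp_all add: proj_L[OF mi M])

lemma EM_pow_lin: "(EM n M ^^ j) (\<lambda>x. a x + c * b x) = (\<lambda>x. (EM n M ^^ j) a x + c * (EM n M ^^ j) b x)"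
  by (induction j) (simp_all add: EM_lin)

lemma sl2_M:
  "PM n M d (v :: (nat \<Rightarrow> nat) \<Rightarrow> 'a::field_char_0) \<Longrightarrow> 2*d < mdeg n M \<Longrightarrow>
    (EM n M ^^ (mdeg n M - 2*d)) v = (\<lambda>x. 0) \<Longrightarrow> v = (\<lambda>x. 0)"
  by (rule sl2_inj[where E="EM n M" and F="FM n M" and P="PM n M"])
     (simp_all add: EM_lin FM0 PM_E PM_F PM_F0 comm_M)

lemma mdeg_madd: "mdeg n (madd u m) = mdeg n u + mdeg n m"
  by (simp add: mdeg_def madd_def sum.distrib)

lemma std_deg_le:
  assumes top: "top_degree TYPE('a::field) n I t" and m: "m \<in> std n I"
  shows "mdeg n m \<le> t"
proof (rule ccontr)
  assume "\<not> mdeg n m \<le> t"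
  then have "(graded_piece n I (mdeg n m) :: ((nat \<Rightarrow> nat) \<Rightarrow> 'a) set) = {\<lambda>_. 0}"
    using top by (simp add: top_degree_def)
  moreover have "((\<lambda>p. if p = m then 1 else 0) :: (nat \<Rightarrow> nat) \<Rightarrow> 'a) \<in> graded_piece n I (mdeg n m)"
    using m by (auto simp: graded_piece_def quot_elems_def)
  ultimately have "((\<lambda>p. if p = m then 1 else 0) :: (nat \<Rightarrow> nat) \<Rightarrow> 'a) = (\<lambda>_. 0)" by blast
  from fun_cong[OF this, of m] show False by simp
qed

lemma std_ext:
  assumes lev: "level TYPE('a::field) n I t" and m: "m \<in> std n I" and lt: "mdeg n m < t"
  shows "\<exists>u\<in>monomials n. mdeg n u = 1 \<and> madd u m \<in> std n I"
proof (rule ccontr)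
  assume H: "\<not> (\<exists>u\<in>monomials n. mdeg n u = 1 \<and> madd u m \<in> std n I)"
  define \<delta> where "\<delta> = ((\<lambda>p. if p = m then 1 else 0) :: (nat \<Rightarrow> nat) \<Rightarrow> 'a)"
  have dq: "\<delta> \<in> quot_elems n I" using m by (auto simp: \<delta>_def quot_elems_def)
  have "\<delta> \<in> socle n I"
    unfolding socle_def
  proof (intro CollectI conjI ballI dq)
    fix a :: "(nat \<Rightarrow> nat) \<Rightarrow> 'a" assume a: "a \<in> graded_piece n I 1"
    show "quot_mult n I a \<delta> = (\<lambda>_. 0)"
    proof
      fix p
      have "(if madd u q = p then a u * \<delta> q else 0) = 0" if p: "p \<in> std n I" and u: "u \<in> std n I" for u q
      proof (cases "madd u q = p \<and> q = m \<and> a u \<noteq> 0")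
        case True
        then have "mdeg n u = 1" using a by (auto simp: graded_piece_def)
        moreover have "u \<in> monomials n" using u by (simp add: std_def)
        moreover have "madd u m \<in> std n I" using True p by metis
        ultimately have False using H by blast
        then show ?thesis ..
      next
        case False
        then show ?thesis by (auto simp: \<delta>_def)
      qed
      then show "quot_mult n I a \<delta> p = 0"
        by (simp add: quot_mult_def)
    qed
  qed
  then have "\<delta> \<in> graded_piece n I t" using lev by (simp add: level_def)
  then have "\<forall>p. mdeg n p \<noteq> t \<longrightarrow> \<delta> p = 0" by (simp add: graded_piece_def)
  moreover have "\<delta> m \<noteq> 0" by (simp add: \<delta>_def)
  ultimately have "mdeg n m = t" by blast
  then show False using lt by simp
qed

lemma std_reach:
  assumes lev: "level TYPE('a::field) n I t"
  shows "m \<in> std n I \<Longrightarrow> mdeg n m + j = t \<Longrightarrow> \<exists>M\<in>std n I. mdeg n M = t \<and> mle m M"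
proof (induction j arbitrary: m)
  case 0
  then show ?case by (auto simp: mle_def)
next
  case (Suc j)
  obtain u where u: "u \<in> monomials n" "mdeg n u = 1" "madd u m \<in> std n I"
    using std_ext[OF lev Suc.prems(1)] Suc.prems(2) by auto
  have "mdeg n (madd u m) + j = t" using u Suc.prems(2) by (simp add: mdeg_madd)
  then obtain M where M: "M \<in> std n I" "mdeg n M = t" "mle (madd u m) M"
    using Suc.IH u(3) by blast
  have "mle m M" using M(3) unfolding mle_def madd_def by (metis add_leE)
  then show ?case using M by blast
qed



lemma key:
  fixes f1 f2 :: "(nat \<Rightarrow> nat) \<Rightarrow> 'a::field_char_0"
  assumes mi: "is_monomial_ideal n I"
    and top: "top_degree TYPE('a) n I t"
    and lev: "level TYPE('a) n I t"
    and kt: "2 * k < t"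
    and f1: "f1 \<in> graded_piece n I k" and f2: "f2 \<in> graded_piece n I k"
    and eq: "(Lop n I ^^ (t - 2*k)) f1 = (Lop n I ^^ (t - 2*k)) f2"
  shows "f1 = f2"
proof
  fix m
  show "f1 m = f2 m"
  proof (cases "m \<in> std n I \<and> mdeg n m = k")
    case False
    then have "f1 m = 0" "f2 m = 0" using f1 f2 by (auto simp: graded_piece_def quot_elems_def)
    then show ?thesis by simp
  next
    case True
    then have ms: "m \<in> std n I" and md: "mdeg n m = k" by auto
    have "mdeg n m + (t - k) = t" using md kt by simp
    then obtain M where M: "M \<in> std n I" "mdeg n M = t" "mle m M"
      using std_reach[OF lev ms] by blast
    define v where "v = (\<lambda>x. proj M f1 x + (- 1) * proj M f2 x)"
    have Pv: "PM n M k v"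
      unfolding PM_def
    proof (intro allI impI)
      fix x assume "v x \<noteq> 0"
      then have "mle x M" and "f1 x \<noteq> 0 \<or> f2 x \<noteq> 0" by (auto simp: v_def proj_def split: if_splits)
      then show "mle x M \<and> mdeg n x = k" using f1 f2 by (auto simp: graded_piece_def)
    qed
    have "(EM n M ^^ (mdeg n M - 2*k)) v = (\<lambda>x. (EM n M ^^ (t - 2*k)) (proj M f1) x + (-1) * (EM n M ^^ (t - 2*k)) (proj M f2) x)"
      unfolding v_def M(2) by (rule EM_pow_lin)
    also have "\<dots> = (\<lambda>x. proj M ((Lop n I ^^ (t - 2*k)) f1) x + (-1) * proj M ((Lop n I ^^ (t - 2*k)) f2) x)"
      by (simp only: proj_Lpow[OF mi M(1)])
    also have "\<dots> = (\<lambda>x. 0)" unfolding eq by simp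
    finally have "v = (\<lambda>x. 0)" using sl2_M[OF Pv] kt M(2) by simp
    then have "v m = 0" by simp
    then show ?thesis using M(3) by (simp add: v_def proj_def)
  qed
qed

theorem lemma2p3:
  fixes n t :: nat and I :: "(nat \<Rightarrow> nat) set"
  assumes "is_monomial_ideal n I"
    and "artinian_quot n I"
    and "top_degree TYPE('a::field_char_0) n I t"
    and "level TYPE('a) n I t"
  shows "\<forall>k::nat. 2 * k < t \<longrightarrow>
      inj_on (quot_mult n I (quot_pow n I (sum_vars n I :: (nat \<Rightarrow> nat) \<Rightarrow> 'a) (t - 2 * k)))
             (graded_piece n I k)
    \<and> inj_on (quot_mult n I (sum_vars n I :: (nat \<Rightarrow> nat) \<Rightarrow> 'a)) (graded_piece n I k)"
proof (intro allI impI conjI)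
  note mi = assms(1)
  have fin: "finite (std n I)" using assms(2) by (simp add: artinian_quot_def)
  fix k :: nat assume kt: "2 * k < t"
  have ge: "f \<in> graded_piece n I k \<Longrightarrow> f \<in> quot_elems n I" for f :: "(nat \<Rightarrow> nat) \<Rightarrow> 'a"
    by (simp add: graded_piece_def)
  show "inj_on (quot_mult n I (quot_pow n I (sum_vars n I :: (nat \<Rightarrow> nat) \<Rightarrow> 'a) (t - 2 * k)))
             (graded_piece n I k)"
  proof (rule inj_onI)
    fix f1 f2 :: "(nat \<Rightarrow> nat) \<Rightarrow> 'a"
    assume f1: "f1 \<in> graded_piece n I k" and f2: "f2 \<in> graded_piece n I k"
      and e: "quot_mult n I (quot_pow n I (sum_vars n I) (t - 2 * k)) f1 = quot_mult n I (quot_pow n I (sum_vars n I) (t - 2 * k)) f2"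
    have "(Lop n I ^^ (t - 2*k)) f1 = (Lop n I ^^ (t - 2*k)) f2"
      using e by (simp add: pow_mult[OF mi fin ge[OF f1]] pow_mult[OF mi fin ge[OF f2]])
    then show "f1 = f2" by (rule key[OF mi assms(3) assms(4) kt f1 f2])
  qed
  show "inj_on (quot_mult n I (sum_vars n I :: (nat \<Rightarrow> nat) \<Rightarrow> 'a)) (graded_piece n I k)"
  proof (rule inj_onI)
    fix f1 f2 :: "(nat \<Rightarrow> nat) \<Rightarrow> 'a"
    assume f1: "f1 \<in> graded_piece n I k" and f2: "f2 \<in> graded_piece n I k"
      and e: "quot_mult n I (sum_vars n I) f1 = quot_mult n I (sum_vars n I) f2"
    have L: "Lop n I f1 = Lop n I f2" using e by (simp add: Lmult[OF mi fin])
    have r: "t - 2*k = Suc (t - 2*k - 1)" using kt by simp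
    have "(Lop n I ^^ (t - 2*k)) f1 = (Lop n I ^^ (t - 2*k)) f2"
    proof -
      have P: "(Lop n I ^^ (t - 2*k)) g = (Lop n I ^^ (t - 2*k - 1)) (Lop n I g)" for g :: "(nat \<Rightarrow> nat) \<Rightarrow> 'a"
        using r by (metis funpow_Suc_right comp_apply)
      show ?thesis by (simp only: P L)
    qed
    then show "f1 = f2" by (rule key[OF mi assms(3) assms(4) kt f1 f2])
  qed
qed


end
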